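(* Let $\Gamma=(V,E)$ be a graph and $x,y\in V$. If perfect state transfer occurs from $d^*e_x$ to $d^*e_y$ on $\Gamma$, then $\mathrm{Aut}(\Gamma)_x=\mathrm{Aut}(\Gamma)_y$.
   Context: All graphs are finite and simple. $\mathcal{A}$ is the set of symmetric arcs of $\Gamma$, $t((x,y))=y$, $(x,y)^{-1}=(y,x)$. The boundary matrix is $d_{x,a}=\frac{1}{\sqrt{\deg x}}\delta_{x,t(a)}$; $R_{a,b}=\delta_{a,b^{-1}}$; $U=R(2d^*d-I_{\mathcal{A}})$; $e_x$ is the standard unit vector of $\mathbb{C}^V$. Perfect state transfer from $\Phi$ to a distinct state $\Psi$ means $U^\tau\Phi=\gamma\Psi$ for some $\tau\in\mathbb{Z}_{\ge1}$ and $\gamma\in\mathbb{C}$ with $|\gamma|=1$. $\mathrm{Aut}(\Gamma)$ is the automorphism group of $\Gamma$ and $\mathrm{Aut}(\Gamma)_x=\{g\in\mathrm{Aut}(\Gamma)\mid g(x)=x\}$. *)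

theory Defs
  imports Complex_Main
begin

definition simple_graph :: "'a set \<Rightarrow> ('a \<Rightarrow> 'a \<Rightarrow> bool) \<Rightarrow> bool" where
  "simple_graph V E \<longleftrightarrow> finite V \<and> (\<forall>u v. E u v \<longrightarrow> u \<in> V \<and> v \<in> V)
     \<and> (\<forall>u v. E u v \<longrightarrow> E v u) \<and> (\<forall>u. \<not> E u u)"

(* symmetric arcs; an arc a = (x,y) has terminus t(a) = snd a, inverse prod.swap a *)
definition arcs :: "'a set \<Rightarrow> ('a \<Rightarrow> 'a \<Rightarrow> bool) \<Rightarrow> ('a \<times> 'a) set" where
  "arcs V E = {(x, y). x \<in> V \<and> y \<in> V \<and> E x y}"

definition deg :: "'a set \<Rightarrow> ('a \<Rightarrow> 'a \<Rightarrow> bool) \<Rightarrow> 'a \<Rightarrow> nat" where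
  "deg V E x = card {y \<in> V. E x y}"

definition bd :: "'a set \<Rightarrow> ('a \<Rightarrow> 'a \<Rightarrow> bool) \<Rightarrow> 'a \<Rightarrow> 'a \<times> 'a \<Rightarrow> complex" where
  "bd V E x a = (if x = snd a then complex_of_real (1 / sqrt (real (deg V E x))) else 0)"

definition Rmat :: "'a \<times> 'a \<Rightarrow> 'a \<times> 'a \<Rightarrow> complex" where
  "Rmat a b = (if a = prod.swap b then 1 else 0)"

definition dstar_d :: "'a set \<Rightarrow> ('a \<Rightarrow> 'a \<Rightarrow> bool) \<Rightarrow> 'a \<times> 'a \<Rightarrow> 'a \<times> 'a \<Rightarrow> complex" where
  "dstar_d V E a b = (\<Sum>x\<in>V. cnj (bd V E x a) * bd V E x b)"

definition Umat :: "'a set \<Rightarrow> ('a \<Rightarrow> 'a \<Rightarrow> bool) \<Rightarrow> 'a \<times> 'a \<Rightarrow> 'a \<times> 'a \<Rightarrow> complex" where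
  "Umat V E a b = (\<Sum>c\<in>arcs V E. Rmat a c * (2 * dstar_d V E c b - (if c = b then 1 else 0)))"

(* action of U on vectors of C^A (only the entries on arcs are used) *)
definition Uop :: "'a set \<Rightarrow> ('a \<Rightarrow> 'a \<Rightarrow> bool) \<Rightarrow> ('a \<times> 'a \<Rightarrow> complex) \<Rightarrow> ('a \<times> 'a \<Rightarrow> complex)" where
  "Uop V E \<phi> = (\<lambda>a. \<Sum>b\<in>arcs V E. Umat V E a b * \<phi> b)"

definition dstar_e :: "'a set \<Rightarrow> ('a \<Rightarrow> 'a \<Rightarrow> bool) \<Rightarrow> 'a \<Rightarrow> ('a \<times> 'a \<Rightarrow> complex)" where
  "dstar_e V E x = (\<lambda>a. \<Sum>z\<in>V. cnj (bd V E z a) * (if z = x then 1 else 0))"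

definition pst :: "'a set \<Rightarrow> ('a \<Rightarrow> 'a \<Rightarrow> bool) \<Rightarrow> ('a \<times> 'a \<Rightarrow> complex) \<Rightarrow> ('a \<times> 'a \<Rightarrow> complex) \<Rightarrow> bool" where
  "pst V E \<Phi> \<Psi> \<longleftrightarrow> (\<exists>a\<in>arcs V E. \<Phi> a \<noteq> \<Psi> a) \<and>
     (\<exists>\<tau>::nat. \<tau> \<ge> 1 \<and> (\<exists>\<gamma>::complex. cmod \<gamma> = 1 \<and>
        (\<forall>a\<in>arcs V E. ((Uop V E ^^ \<tau>) \<Phi>) a = \<gamma> * \<Psi> a)))"

definition Aut :: "'a set \<Rightarrow> ('a \<Rightarrow> 'a \<Rightarrow> bool) \<Rightarrow> ('a \<Rightarrow> 'a) set" where
  "Aut V E = {g. bij_betw g V V \<and> (\<forall>u\<in>V. \<forall>v\<in>V. E u v \<longleftrightarrow> E (g u) (g v))}"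

definition Aut_stab :: "'a set \<Rightarrow> ('a \<Rightarrow> 'a \<Rightarrow> bool) \<Rightarrow> 'a \<Rightarrow> ('a \<Rightarrow> 'a) set" where
  "Aut_stab V E x = {g \<in> Aut V E. g x = x}"

end

theory Submission
  imports Defs
begin

abbreviation "A V E \<equiv> arcs V E"

definition coin :: "'a set \<Rightarrow> ('a \<Rightarrow> 'a \<Rightarrow> bool) \<Rightarrow> ('a \<times> 'a \<Rightarrow> complex) \<Rightarrow> 'a \<times> 'a \<Rightarrow> complex" where
  "coin V E \<phi> a = 2 / of_nat (deg V E (snd a)) * (\<Sum>b\<in>{b\<in>arcs V E. snd b = snd a}. \<phi> b) - \<phi> a"

lemma arcs_fin: "simple_graph V E \<Longrightarrow> finite (arcs V E)"
proof -
  assume g: "simple_graph V E"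
  have "arcs V E \<subseteq> V \<times> V" unfolding arcs_def by auto
  moreover have "finite (V \<times> V)" using g unfolding simple_graph_def by auto
  ultimately show ?thesis using finite_subset by blast
qed

lemma in_arcs: "a \<in> arcs V E \<longleftrightarrow> fst a \<in> V \<and> snd a \<in> V \<and> E (fst a) (snd a)"
  unfolding arcs_def by (cases a) auto

lemma swap_arcs: "simple_graph V E \<Longrightarrow> a \<in> arcs V E \<Longrightarrow> prod.swap a \<in> arcs V E"
  unfolding in_arcs simple_graph_def by (cases a) auto

lemma card_in: "simple_graph V E \<Longrightarrow> v \<in> V \<Longrightarrow> card {b\<in>arcs V E. snd b = v} = deg V E v"
proof -
  assume g: "simple_graph V E" and v: "v \<in> V"
  have "{b\<in>arcs V E. snd b = v} = (\<lambda>u. (u, v)) ` {y \<in> V. E v y}"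
    using g v unfolding simple_graph_def in_arcs by (auto simp: image_iff)
  moreover have "inj_on (\<lambda>u. (u, v)) {y \<in> V. E v y}" by (auto simp: inj_on_def)
  ultimately show ?thesis unfolding deg_def by (simp add: card_image)
qed

lemma dd_formula:
  assumes g: "simple_graph V E" and c: "c \<in> arcs V E"
  shows "dstar_d V E c b = (if snd b = snd c then 1 / of_nat (deg V E (snd c)) else 0)"
proof -
  have cv: "snd c \<in> V" using c by (simp add: in_arcs)
  have "dstar_d V E c b = (\<Sum>x\<in>V. if x = snd c then cnj (bd V E x c) * bd V E x b else 0)"
    unfolding dstar_d_def by (rule sum.cong) (auto simp: bd_def)
  also have "\<dots> = cnj (bd V E (snd c) c) * bd V E (snd c) b" using cv g
    by (simp add: simple_graph_def)
  also have "\<dots> = (if snd b = snd c then 1 / of_nat (deg V E (snd c)) else 0)"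
  proof -
    have "complex_of_real (1 / sqrt (real (deg V E (snd c)))) * complex_of_real (1 / sqrt (real (deg V E (snd c))))
        = complex_of_real (1 / real (deg V E (snd c)))"
      by (simp flip: of_real_mult)
    then show ?thesis unfolding bd_def by auto
  qed
  finally show ?thesis .
qed

lemma Uop_coin:
  assumes g: "simple_graph V E" and a: "a \<in> arcs V E"
  shows "Uop V E \<phi> a = coin V E \<phi> (prod.swap a)"
proof -
  have sa: "prod.swap a \<in> arcs V E" using swap_arcs[OF g a] .
  have fin: "finite (arcs V E)" using arcs_fin[OF g] .
  have U: "Umat V E a b = 2 * dstar_d V E (prod.swap a) b - (if prod.swap a = b then 1 else 0)" for b
  proof -
    have "Umat V E a b = (\<Sum>c\<in>arcs V E. if c = prod.swap a then 2 * dstar_d V E c b - (if c = b then 1 else 0) else 0)"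
      unfolding Umat_def Rmat_def by (rule sum.cong) auto
    also have "\<dots> = 2 * dstar_d V E (prod.swap a) b - (if prod.swap a = b then 1 else 0)"
      using fin sa by simp
    finally show ?thesis .
  qed
  have "Uop V E \<phi> a = (\<Sum>b\<in>arcs V E. 2 * (dstar_d V E (prod.swap a) b * \<phi> b) - (if prod.swap a = b then \<phi> b else 0))"
    unfolding Uop_def U by (rule sum.cong) (auto simp: algebra_simps)
  also have "\<dots> = 2 * (\<Sum>b\<in>arcs V E. dstar_d V E (prod.swap a) b * \<phi> b) - \<phi> (prod.swap a)"
    using fin sa by (simp add: sum_subtractf sum_distrib_left)
  also have "(\<Sum>b\<in>arcs V E. dstar_d V E (prod.swap a) b * \<phi> b)
      = (\<Sum>b\<in>arcs V E. if snd b = snd (prod.swap a) then 1 / of_nat (deg V E (snd (prod.swap a))) * \<phi> b else 0)"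
    using dd_formula[OF g sa] by (intro sum.cong) auto
  also have "\<dots> = (\<Sum>b\<in>{b\<in>arcs V E. snd b = snd (prod.swap a)}. 1 / of_nat (deg V E (snd (prod.swap a))) * \<phi> b)"
    using fin by (rule sum.inter_filter[symmetric])
  also have "\<dots> = 1 / of_nat (deg V E (snd (prod.swap a))) * (\<Sum>b\<in>{b\<in>arcs V E. snd b = snd (prod.swap a)}. \<phi> b)"
    by (simp add: sum_distrib_left)
  finally show ?thesis unfolding coin_def by simp
qed

lemma coin_cong:
  assumes "\<forall>b\<in>arcs V E. \<phi> b = \<psi> b" "a \<in> arcs V E"
  shows "coin V E \<phi> a = coin V E \<psi> a"
  unfolding coin_def using assms by (auto intro!: sum.cong)

lemma Uop_cong:
  assumes "\<forall>b\<in>arcs V E. \<phi> b = \<psi> b"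
  shows "Uop V E \<phi> a = Uop V E \<psi> a"
  unfolding Uop_def using assms by (auto intro!: sum.cong)

lemma coin_invol:
  assumes g: "simple_graph V E" and a: "a \<in> arcs V E"
  shows "coin V E (coin V E \<phi>) a = \<phi> a"
proof -
  let ?S = "{b\<in>arcs V E. snd b = snd a}"
  let ?d = "of_nat (deg V E (snd a)) :: complex"
  have fin: "finite ?S" using arcs_fin[OF g] by simp
  have cS: "card ?S = deg V E (snd a)" using card_in[OF g] a by (simp add: in_arcs)
  have "a \<in> ?S" using a by simp
  hence "card ?S \<noteq> 0" using fin card_0_eq by blast
  hence d0: "?d \<noteq> 0" using cS by simp
  have "(\<Sum>b\<in>?S. coin V E \<phi> b) = (\<Sum>b\<in>?S. 2 / ?d * (\<Sum>c\<in>?S. \<phi> c) - \<phi> b)"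
    unfolding coin_def by (rule sum.cong) auto
  also have "\<dots> = of_nat (card ?S) * (2 / ?d * (\<Sum>c\<in>?S. \<phi> c)) - (\<Sum>c\<in>?S. \<phi> c)"
    by (simp add: sum_subtractf)
  also have "\<dots> = (\<Sum>c\<in>?S. \<phi> c)" using d0 cS by (simp add: field_simps)
  finally have e: "(\<Sum>b\<in>?S. coin V E \<phi> b) = (\<Sum>c\<in>?S. \<phi> c)" .
  show ?thesis unfolding coin_def[of V E "coin V E \<phi>"] e by (simp add: coin_def)
qed

lemma Uop_inj:
  assumes g: "simple_graph V E" and h: "\<forall>a\<in>arcs V E. Uop V E \<phi> a = Uop V E \<psi> a"
  shows "\<forall>a\<in>arcs V E. \<phi> a = \<psi> a"
proof
  fix a assume a: "a \<in> arcs V E"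
  have c: "\<forall>b\<in>arcs V E. coin V E \<phi> b = coin V E \<psi> b"
  proof
    fix b assume b: "b \<in> arcs V E"
    have sb: "prod.swap b \<in> arcs V E" using swap_arcs[OF g b] .
    show "coin V E \<phi> b = coin V E \<psi> b"
      using h sb Uop_coin[OF g sb, of \<phi>] Uop_coin[OF g sb, of \<psi>] by simp
  qed
  have "\<phi> a = coin V E (coin V E \<phi>) a" using coin_invol[OF g a] by simp
  also have "\<dots> = coin V E (coin V E \<psi>) a" using coin_cong[OF c a] .
  also have "\<dots> = \<psi> a" using coin_invol[OF g a] .
  finally show "\<phi> a = \<psi> a" .
qed

lemma Uop_pow_inj:
  assumes g: "simple_graph V E"
  shows "\<forall>a\<in>arcs V E. (Uop V E ^^ n) \<phi> a = (Uop V E ^^ n) \<psi> a \<Longrightarrow> \<forall>a\<in>arcs V E. \<phi> a = \<psi> a"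
proof (induction n arbitrary: \<phi> \<psi>)
  case 0 then show ?case by simp
next
  case (Suc n)
  have "\<forall>a\<in>arcs V E. (Uop V E ^^ n) (Uop V E \<phi>) a = (Uop V E ^^ n) (Uop V E \<psi>) a"
    using Suc.prems by (simp only: funpow_Suc_right o_apply)
  then have "\<forall>a\<in>arcs V E. Uop V E \<phi> a = Uop V E \<psi> a" by (rule Suc.IH)
  then show ?case by (rule Uop_inj[OF g])
qed

lemma Uop_zero1: "Uop V E (\<lambda>_. 0) = (\<lambda>_. 0)"
  unfolding Uop_def by simp

lemma Uop_zero: "(Uop V E ^^ n) (\<lambda>_. 0) = (\<lambda>_. 0)"
proof (induction n)
  case 0 then show ?case by simp
next
  case (Suc n) then show ?case by (simp add: Uop_zero1)
qed

lemma Uop_pow_cong: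
  "\<forall>b\<in>arcs V E. \<phi> b = \<psi> b \<Longrightarrow> \<forall>a\<in>arcs V E. (Uop V E ^^ n) \<phi> a = (Uop V E ^^ n) \<psi> a"
proof (induction n)
  case 0 then show ?case by simp
next
  case (Suc n)
  have "Uop V E ((Uop V E ^^ n) \<phi>) a = Uop V E ((Uop V E ^^ n) \<psi>) a" for a
    using Suc by (intro Uop_cong) blast
  then show ?case by simp
qed

definition gm :: "('a \<Rightarrow> 'a) \<Rightarrow> 'a \<times> 'a \<Rightarrow> 'a \<times> 'a" where
  "gm g a = (g (fst a), g (snd a))"

lemma gm_arcs: "g \<in> Aut V E \<Longrightarrow> a \<in> arcs V E \<Longrightarrow> gm g a \<in> arcs V E"
  unfolding Aut_def in_arcs gm_def bij_betw_def by auto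

lemma deg_aut:
  assumes g: "g \<in> Aut V E" and v: "v \<in> V"
  shows "deg V E (g v) = deg V E v"
proof -
  have b: "bij_betw g V V" and e: "\<forall>u\<in>V. \<forall>w\<in>V. E u w \<longleftrightarrow> E (g u) (g w)" using g by (auto simp: Aut_def)
  have "{y \<in> V. E (g v) y} = g ` {y \<in> V. E v y}"
  proof
    show "g ` {y \<in> V. E v y} \<subseteq> {y \<in> V. E (g v) y}" using b e v by (auto simp: bij_betw_def)
    show "{y \<in> V. E (g v) y} \<subseteq> g ` {y \<in> V. E v y}"
    proof
      fix y assume y: "y \<in> {y \<in> V. E (g v) y}"
      then obtain u where u: "u \<in> V" "y = g u" using b by (auto simp: bij_betw_def)
      then show "y \<in> g ` {y \<in> V. E v y}" using y e v by auto
    qed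
  qed
  moreover have "inj_on g {y \<in> V. E v y}" using b by (auto simp: bij_betw_def inj_on_def)
  ultimately show ?thesis unfolding deg_def by (simp add: card_image)
qed

lemma gm_bij:
  assumes g: "g \<in> Aut V E" and v: "v \<in> V"
  shows "bij_betw (gm g) {b\<in>arcs V E. snd b = v} {b\<in>arcs V E. snd b = g v}"
proof -
  have b: "bij_betw g V V" and e: "\<forall>u\<in>V. \<forall>w\<in>V. E u w \<longleftrightarrow> E (g u) (g w)" using g by (auto simp: Aut_def)
  have inj: "inj_on g V" using b by (simp add: bij_betw_def)
  show ?thesis unfolding bij_betw_def
  proof
    show "inj_on (gm g) {b\<in>arcs V E. snd b = v}"
      using inj unfolding inj_on_def gm_def in_arcs by (auto simp: prod_eq_iff)
    show "gm g ` {b\<in>arcs V E. snd b = v} = {b\<in>arcs V E. snd b = g v}"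
    proof
      show "gm g ` {b\<in>arcs V E. snd b = v} \<subseteq> {b\<in>arcs V E. snd b = g v}"
        using gm_arcs[OF g] by (auto simp: gm_def)
      show "{b\<in>arcs V E. snd b = g v} \<subseteq> gm g ` {b\<in>arcs V E. snd b = v}"
      proof
        fix c assume c: "c \<in> {b\<in>arcs V E. snd b = g v}"
        then have cf: "fst c \<in> V" and cE: "E (fst c) (g v)" by (auto simp: in_arcs)
        then obtain u where u: "u \<in> V" "fst c = g u" using b by (auto simp: bij_betw_def)
        have "E u v" using e u v cE by auto
        then have "(u, v) \<in> {b\<in>arcs V E. snd b = v}" using u v by (simp add: in_arcs)
        moreover have "c = gm g (u, v)" using c u by (auto simp: gm_def prod_eq_iff)
        ultimately show "c \<in> gm g ` {b\<in>arcs V E. snd b = v}" by blast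
      qed
    qed
  qed
qed

lemma coin_aut:
  assumes gr: "simple_graph V E" and g: "g \<in> Aut V E" and a: "a \<in> arcs V E"
  shows "coin V E (\<phi> \<circ> gm g) a = coin V E \<phi> (gm g a)"
proof -
  have v: "snd a \<in> V" using a by (simp add: in_arcs)
  have "(\<Sum>b\<in>{b\<in>arcs V E. snd b = snd a}. (\<phi> \<circ> gm g) b) = (\<Sum>b\<in>{b\<in>arcs V E. snd b = g (snd a)}. \<phi> b)"
    using sum.reindex_bij_betw[OF gm_bij[OF g v], of \<phi>] by simp
  then show ?thesis unfolding coin_def using deg_aut[OF g v] by (simp add: gm_def)
qed

lemma Uop_aut:
  assumes gr: "simple_graph V E" and g: "g \<in> Aut V E" and a: "a \<in> arcs V E"
  shows "Uop V E (\<phi> \<circ> gm g) a = Uop V E \<phi> (gm g a)"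
proof -
  have "Uop V E (\<phi> \<circ> gm g) a = coin V E (\<phi> \<circ> gm g) (prod.swap a)" using Uop_coin[OF gr a] .
  also have "\<dots> = coin V E \<phi> (gm g (prod.swap a))" using coin_aut[OF gr g swap_arcs[OF gr a]] .
  also have "\<dots> = coin V E \<phi> (prod.swap (gm g a))" by (simp add: gm_def)
  also have "\<dots> = Uop V E \<phi> (gm g a)" using Uop_coin[OF gr gm_arcs[OF g a]] by simp
  finally show ?thesis .
qed

lemma Uop_pow_aut:
  assumes gr: "simple_graph V E" and g: "g \<in> Aut V E"
  shows "\<forall>a\<in>arcs V E. (Uop V E ^^ n) (\<phi> \<circ> gm g) a = (Uop V E ^^ n) \<phi> (gm g a)"
proof (induction n)
  case 0 then show ?case by simp
next
  case (Suc n)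
  show ?case
  proof
    fix a assume a: "a \<in> arcs V E"
    have "(Uop V E ^^ Suc n) (\<phi> \<circ> gm g) a = Uop V E ((Uop V E ^^ n) (\<phi> \<circ> gm g)) a" by simp
    also have "\<dots> = Uop V E ((Uop V E ^^ n) \<phi> \<circ> gm g) a"
      by (intro Uop_cong ballI) (metis Suc.IH comp_apply)
    also have "\<dots> = (Uop V E ^^ Suc n) \<phi> (gm g a)" using Uop_aut[OF gr g a] by simp
    finally show "(Uop V E ^^ Suc n) (\<phi> \<circ> gm g) a = (Uop V E ^^ Suc n) \<phi> (gm g a)" .
  qed
qed

lemma dstar_e_val:
  assumes gr: "simple_graph V E" and z: "z \<in> V"
  shows "dstar_e V E z a = (if snd a = z then complex_of_real (1 / sqrt (real (deg V E z))) else 0)"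
proof -
  have fin: "finite V" using gr by (simp add: simple_graph_def)
  have "dstar_e V E z a = (\<Sum>w\<in>V. if w = z then cnj (bd V E w a) else 0)"
    unfolding dstar_e_def by (rule sum.cong) auto
  also have "\<dots> = cnj (bd V E z a)" using fin z by simp
  finally show ?thesis unfolding bd_def by auto
qed

lemma dstar_e_fix:
  assumes gr: "simple_graph V E" and g: "g \<in> Aut V E" and z: "z \<in> V" and gz: "g z = z" and a: "a \<in> arcs V E"
  shows "dstar_e V E z (gm g a) = dstar_e V E z a"
proof -
  have inj: "inj_on g V" using g by (auto simp: Aut_def bij_betw_def)
  have "snd a \<in> V" using a by (simp add: in_arcs)
  then have "g (snd a) = z \<longleftrightarrow> snd a = z" using inj z gz by (metis inj_on_eq_iff)
  then show ?thesis using dstar_e_val[OF gr z] by (simp add: gm_def)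
qed

lemma fixed_if_nonzero:
  assumes gr: "simple_graph V E" and g: "g \<in> Aut V E" and z: "z \<in> V"
    and inv: "\<forall>a\<in>arcs V E. dstar_e V E z (gm g a) = dstar_e V E z a"
    and nz: "\<exists>a\<in>arcs V E. dstar_e V E z a \<noteq> 0"
  shows "g z = z"
proof -
  obtain a where a: "a \<in> arcs V E" "dstar_e V E z a \<noteq> 0" using nz by blast
  then have "dstar_e V E z (gm g a) \<noteq> 0" using inv by simp
  then have "g (snd a) = z" using dstar_e_val[OF gr z] by (auto simp: gm_def split: if_splits)
  moreover have "snd a = z" using a dstar_e_val[OF gr z] by (auto split: if_splits)
  ultimately show ?thesis by simp
qed

theorem corollary3p4:
  fixes V :: "'a set" and E :: "'a \<Rightarrow> 'a \<Rightarrow> bool" and x y :: 'a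
  assumes "simple_graph V E" and "x \<in> V" and "y \<in> V"
    and "pst V E (dstar_e V E x) (dstar_e V E y)"
  shows "Aut_stab V E x = Aut_stab V E y"
proof -
  note gr = assms(1)
  let ?X = "dstar_e V E x" and ?Y = "dstar_e V E y" and ?U = "Uop V E"
  obtain \<tau> \<gamma> where dist: "\<exists>a\<in>arcs V E. ?X a \<noteq> ?Y a" and g1: "cmod \<gamma> = 1"
    and tr: "\<forall>a\<in>arcs V E. (?U ^^ \<tau>) ?X a = \<gamma> * ?Y a"
    using assms(4) unfolding pst_def by blast
  have g0: "\<gamma> \<noteq> 0" using g1 by auto
  have nzX: "\<exists>a\<in>arcs V E. ?X a \<noteq> 0"
  proof (rule ccontr)
    assume nz: "\<not> ?thesis"
    then have "\<forall>a\<in>arcs V E. ?X a = (\<lambda>_. 0) a" by simp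
    then have "\<forall>a\<in>arcs V E. (?U ^^ \<tau>) ?X a = (?U ^^ \<tau>) (\<lambda>_. 0) a" by (rule Uop_pow_cong)
    then have "\<forall>a\<in>arcs V E. \<gamma> * ?Y a = 0" using tr by (simp add: Uop_zero)
    then have "\<forall>a\<in>arcs V E. ?Y a = 0" using g0 by simp
    then show False using dist nz by auto
  qed
  have nzY: "\<exists>a\<in>arcs V E. ?Y a \<noteq> 0"
  proof (rule ccontr)
    assume nz: "\<not> ?thesis"
    then have "\<forall>a\<in>arcs V E. (?U ^^ \<tau>) ?X a = (?U ^^ \<tau>) (\<lambda>_. 0) a" using tr by (simp add: Uop_zero)
    then have "\<forall>a\<in>arcs V E. ?X a = 0" using Uop_pow_inj[OF gr] by blast
    then show False using dist nz by auto
  qed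
  show ?thesis
  proof (intro set_eqI iffI)
    fix g assume "g \<in> Aut_stab V E x"
    then have g: "g \<in> Aut V E" and gx: "g x = x" by (auto simp: Aut_stab_def)
    have "\<forall>a\<in>arcs V E. ?Y (gm g a) = ?Y a"
    proof
      fix a assume a: "a \<in> arcs V E"
      have "\<gamma> * ?Y (gm g a) = (?U ^^ \<tau>) ?X (gm g a)" using tr gm_arcs[OF g a] by simp
      also have "\<dots> = (?U ^^ \<tau>) (?X \<circ> gm g) a" using Uop_pow_aut[OF gr g] a by simp
      also have "\<dots> = (?U ^^ \<tau>) ?X a"
        using Uop_pow_cong[of V E "?X \<circ> gm g" ?X \<tau>] dstar_e_fix[OF gr g assms(2) gx] a by simp
      also have "\<dots> = \<gamma> * ?Y a" using tr a by simp
      finally show "?Y (gm g a) = ?Y a" using g0 by simp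
    qed
    then have "g y = y" using fixed_if_nonzero[OF gr g assms(3)] nzY by blast
    then show "g \<in> Aut_stab V E y" using g by (simp add: Aut_stab_def)
  next
    fix g assume "g \<in> Aut_stab V E y"
    then have g: "g \<in> Aut V E" and gy: "g y = y" by (auto simp: Aut_stab_def)
    have "\<forall>a\<in>arcs V E. (?U ^^ \<tau>) (?X \<circ> gm g) a = (?U ^^ \<tau>) ?X a"
    proof
      fix a assume a: "a \<in> arcs V E"
      have "(?U ^^ \<tau>) (?X \<circ> gm g) a = (?U ^^ \<tau>) ?X (gm g a)" using Uop_pow_aut[OF gr g] a by simp
      also have "\<dots> = \<gamma> * ?Y (gm g a)" using tr gm_arcs[OF g a] by simp
      also have "\<dots> = \<gamma> * ?Y a" using dstar_e_fix[OF gr g assms(3) gy a] by simp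
      also have "\<dots> = (?U ^^ \<tau>) ?X a" using tr a by simp
      finally show "(?U ^^ \<tau>) (?X \<circ> gm g) a = (?U ^^ \<tau>) ?X a" .
    qed
    then have "\<forall>a\<in>arcs V E. (?X \<circ> gm g) a = ?X a" by (rule Uop_pow_inj[OF gr])
    then have "g x = x" using fixed_if_nonzero[OF gr g assms(2)] nzX by simp
    then show "g \<in> Aut_stab V E x" using g by (simp add: Aut_stab_def)
  qed
qed

end
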